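(* Let $\nu\ge1$, $d:\mathbb{Z}^\nu\to\mathbb{C}$ bounded, $J=J_0+D$ on $\ell^2(\mathbb{Z}^\nu)$, and let $u\in\ell^2(\mathbb{Z}^\nu)$, $u\ne0$, satisfy $Ju=\lambda u$ for some $\lambda\in\mathbb{C}$. Then for every $j\in\{1,\dots,\nu\}$, $$\sup\{k_j: k\in\operatorname{supp}(u)\}=\infty\quad\text{and}\quad\inf\{k_j:k\in\operatorname{supp}(u)\}=-\infty,$$ where $k_j$ denotes the $j$-th component of $k\in\mathbb{Z}^\nu$ and $\operatorname{supp}(u)=\{k\in\mathbb{Z}^\nu:u(k)\ne0\}$.
   Context: $J_0$ is the discrete Laplacian on $\ell^2(\mathbb{Z}^\nu)$: $(J_0u)(k)=\sum_{l\in\mathbb{Z}^\nu:\|l\|_1=1}u(k+l)$, where $\|l\|_1=\sum_{j=1}^\nu|l_j|$. $D$ is multiplication by the bounded function $d$, $(Du)(k)=d(k)u(k)$. *)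

theory Defs
  imports "HOL-Analysis.Analysis"
begin

text \<open>Points of Z^nu are vectors of type int ^ 'n, where the finite type 'n
  has CARD('n) = nu elements (nu \<ge> 1 is automatic since types are nonempty).\<close>

definition l1norm :: "int ^ 'n \<Rightarrow> int" where
  "l1norm l = (\<Sum>j\<in>UNIV. \<bar>l $ j\<bar>)"

definition J0 :: "(int ^ 'n \<Rightarrow> complex) \<Rightarrow> (int ^ 'n \<Rightarrow> complex)" where
  "J0 u k = (\<Sum>l\<in>{l. l1norm l = 1}. u (k + l))"

definition Dmul :: "(int ^ 'n \<Rightarrow> complex) \<Rightarrow> (int ^ 'n \<Rightarrow> complex) \<Rightarrow> (int ^ 'n \<Rightarrow> complex)" where
  "Dmul d u k = d k * u k"

definition Jac :: "(int ^ 'n \<Rightarrow> complex) \<Rightarrow> (int ^ 'n \<Rightarrow> complex) \<Rightarrow> (int ^ 'n \<Rightarrow> complex)" where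
  "Jac d u = (\<lambda>k. J0 u k + Dmul d u k)"

definition is_l2 :: "(int ^ 'n \<Rightarrow> complex) \<Rightarrow> bool" where
  "is_l2 u \<longleftrightarrow> (\<lambda>k. (norm (u k))\<^sup>2) summable_on UNIV"

definition supp :: "(int ^ 'n \<Rightarrow> complex) \<Rightarrow> (int ^ 'n) set" where
  "supp u = {k. u k \<noteq> 0}"

end

theory Submission
  imports Defs
begin

lemma finite_L: "finite {l::int^'n. l1norm l = 1}"
proof -
  have "{l::int^'n. l1norm l = 1} \<subseteq> vec_lambda ` (PiE UNIV (\<lambda>_. {-1..1::int}))"
  proof
    fix l :: "int^'n" assume "l \<in> {l. l1norm l = 1}"
    hence s: "(\<Sum>j\<in>UNIV. \<bar>l $ j\<bar>) = 1" by (simp add: l1norm_def)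
    have "\<bar>l $ i\<bar> \<le> 1" for i
      using member_le_sum[of i UNIV "\<lambda>j. \<bar>l $ j\<bar>"] s by simp
    hence "vec_nth l \<in> PiE UNIV (\<lambda>_. {-1..1::int})"
      by (auto simp: PiE_UNIV_domain abs_le_iff)
    thus "l \<in> vec_lambda ` (PiE UNIV (\<lambda>_. {-1..1::int}))"
      by (metis image_eqI vec_nth_inverse)
  qed
  moreover have "finite (vec_lambda ` (PiE UNIV (\<lambda>_. {-1..1::int})) :: (int^'n) set)"
    by (intro finite_imageI finite_PiE) auto
  ultimately show ?thesis by (rule finite_subset)
qed

lemma l1_axis: "s \<in> {1,-1} \<Longrightarrow> l1norm (- axis j (s::int) :: int^'n) = 1"
proof -
  assume "s \<in> {1,-1}"
  hence a: "\<bar>s\<bar> = 1" by auto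
  have "(\<Sum>i\<in>UNIV. \<bar>(- axis j s :: int^'n) $ i\<bar>) = (\<Sum>i\<in>UNIV. if i = j then 1 else 0)"
    by (rule sum.cong) (auto simp: axis_def a)
  thus ?thesis by (simp add: l1norm_def)
qed

lemma l1_eq: assumes "l1norm (l::int^'n) = 1" "l $ j = - s" "s \<in> {1,-1}"
  shows "l = - axis j s"
proof -
  have a: "\<bar>l $ j\<bar> = 1" using assms(2,3) by auto
  have "(\<Sum>i\<in>UNIV. \<bar>l $ i\<bar>) = \<bar>l $ j\<bar> + (\<Sum>i\<in>UNIV-{j}. \<bar>l $ i\<bar>)"
    by (simp add: sum.remove)
  hence "(\<Sum>i\<in>UNIV-{j}. \<bar>l $ i\<bar>) = 0" using assms(1) a by (simp add: l1norm_def)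
  hence "\<forall>i\<in>UNIV-{j}. \<bar>l $ i\<bar> = 0"
    by (subst sum_nonneg_eq_0_iff[symmetric]) auto
  thus ?thesis using assms(2) by (auto simp: vec_eq_iff axis_def)
qed

lemma key:
  fixes u :: "int ^ 'n \<Rightarrow> complex"
  assumes J: "\<And>k. J0 u k = c k * u k"
    and s: "s \<in> {1,-1::int}"
    and bd: "\<And>k. u k \<noteq> 0 \<Longrightarrow> s * k $ j \<le> M"
    and nz: "u k0 \<noteq> 0"
  shows False
proof -
  define T where "T = {x. \<exists>k. u k \<noteq> 0 \<and> s * k $ j = x} \<inter> {s * k0 $ j..}"
  have fT: "finite T" by (rule finite_subset[of _ "{s * k0 $ j..M}"]) (auto simp: T_def bd)
  have "s * k0 $ j \<in> T" using nz by (auto simp: T_def)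
  hence ne: "T \<noteq> {}" by auto
  define m where "m = Max T"
  have "m \<in> T" using fT ne by (simp add: m_def)
  then obtain k where uk: "u k \<noteq> 0" and km: "s * k $ j = m" by (auto simp: T_def)
  have mx: "u k' \<noteq> 0 \<Longrightarrow> s * k' $ j \<le> m" for k'
  proof (cases "s * k' $ j \<ge> s * k0 $ j")
    case True
    assume "u k' \<noteq> 0"
    hence "s * k' $ j \<in> T" using True by (auto simp: T_def)
    thus ?thesis using fT by (simp add: m_def)
  next
    case False
    have "s * k0 $ j \<le> m" using `s * k0 $ j \<in> T` fT by (simp add: m_def)
    thus ?thesis using False by simp
  qed
  have ss: "s * s = 1" using s by auto
  define p where "p = k + axis j s"
  have pj: "s * p $ j = m + 1" using km ss by (simp add: p_def axis_def algebra_simps)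
  have up: "u p = 0" using mx[of p] pj by force
  let ?L = "{l::int^'n. l1norm l = 1}"
  let ?a = "- axis j s :: int^'n"
  have aL: "?a \<in> ?L" using l1_axis[OF s] by simp
  have pa: "p + ?a = k" by (simp add: p_def)
  have z: "u (p + l) = 0" if "l \<in> ?L - {?a}" for l
  proof -
    have l1: "l1norm l = 1" and ln: "l \<noteq> ?a" using that by auto
    have "\<bar>l $ j\<bar> \<le> 1"
      using member_le_sum[of j UNIV "\<lambda>i. \<bar>l $ i\<bar>"] l1 by (simp add: l1norm_def)
    hence "\<bar>s * l $ j\<bar> \<le> 1" using s by (auto simp: abs_mult)
    moreover have "s * l $ j \<noteq> -1"
    proof
      assume "s * l $ j = -1"
      hence "l $ j = - s" using s by auto
      thus False using l1_eq[OF l1 _ s] ln by blast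
    qed
    ultimately have "s * l $ j \<ge> 0" by linarith
    hence "s * (p + l) $ j > m" using pj by (simp add: algebra_simps)
    thus ?thesis using mx by force
  qed
  have "J0 u p = (\<Sum>l\<in>?L. u (p + l))" by (simp add: J0_def)
  also have "\<dots> = u (p + ?a) + (\<Sum>l\<in>?L - {?a}. u (p + l))"
    using sum.remove[OF finite_L aL, of "\<lambda>l. u (p + l)"] by simp
  also have "\<dots> = u k" using z pa by simp
  finally have "u k = 0" using J[of p] up by simp
  thus False using uk by simp
qed

theorem mainTheorem4:
  fixes d u :: "int ^ 'n \<Rightarrow> complex" and lam :: complex
  assumes "bounded (range d)"
    and "is_l2 u"
    and "u \<noteq> (\<lambda>_. 0)"
    and "Jac d u = (\<lambda>k. lam * u k)"
  shows "\<forall>j. (\<forall>M::int. \<exists>k\<in>supp u. k $ j > M) \<and> (\<forall>M::int. \<exists>k\<in>supp u. k $ j < M)"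
proof -
  have J: "J0 u k = (lam - d k) * u k" for k
    using fun_cong[OF assms(4), of k] by (simp add: Jac_def Dmul_def algebra_simps)
  obtain k0 where nz: "u k0 \<noteq> 0" using assms(3) by auto
  show ?thesis
  proof (intro allI conjI)
    fix j M
    show "\<exists>k\<in>supp u. k $ j > M"
    proof (rule ccontr)
      assume "\<not> ?thesis"
      hence "\<And>k. u k \<noteq> 0 \<Longrightarrow> 1 * k $ j \<le> M" by (auto simp: supp_def not_less)
      from key[OF J _ this nz] show False by simp
    qed
  next
    fix j M
    show "\<exists>k\<in>supp u. k $ j < M"
    proof (rule ccontr)
      assume "\<not> ?thesis"
      hence "\<And>k. u k \<noteq> 0 \<Longrightarrow> (-1) * k $ j \<le> -M" by (auto simp: supp_def not_less)
      from key[OF J _ this nz] show False by simp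
    qed
  qed
qed

end
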